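(* Let $\Phi$ be a dictionary with coherence $\mu$ and Babel function $\mu_1$, let $m\ge1$ with $m<\tfrac12(\mu^{-1}+1)$, and let $y=\Phi x^*$ be an $m$-sparse signal with $\|x^*\|_0\le m$. Let $\beta>0$ with $\|x^*\|_1<\beta$. Then there exists an integer $K$ such that for all iterations $k\ge K$ of the Frank-Wolfe algorithm for Problem (P$_\beta$), $$\|r_{k+1}\|_2^2\le(1-\theta)\,\|r_k\|_2^2,\qquad \theta=\frac{1}{16}\cdot\frac{1-\mu_1(m-1)}{m}\cdot\Big(1-\frac{\|x^*\|_1}{\beta}\Big)^2,$$ and $0<\theta\le1$.
   Context: A dictionary is a matrix $\Phi=[\varphi_1,\dots,\varphi_n]\in\mathbb{R}^{d\times n}$ whose columns (atoms) satisfy $\|\varphi_i\|_2=1$. Its coherence is $\mu=\max_{j\neq k}|\langle\varphi_j,\varphi_k\rangle|$, and its Babel function is $\mu_1(p)=\max_{|\Lambda|=p}\max_{i\notin\Lambda}\sum_{j\in\Lambda}|\langle\varphi_i,\varphi_j\rangle|$ for $p\ge1$, with $\mu_1(0)=0$. A signal $y\in\mathbb{R}^d$ is $m$-sparse if $y=\Phi x^*$ for some $x^*\in\mathbb{R}^n$ with at most $m$ nonzero entries; when $m<\tfrac12(\mu^{-1}+1)$ such an $x^*$ is unique. Problem (P$_\beta$): minimize $f(x)=\tfrac12\|y-\Phi x\|_2^2$ over $B_1(\beta)=\{x\in\mathbb{R}^n:\|x\|_1\le\beta\}$. Frank-Wolfe algorithm for (P$_\beta$): set $x_0=0$. For $k=0,1,2,\dots$: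 let $r_k=y-\Phi x_k$ (the residual); choose $i_k\in\arg\max_{i}|\langle\varphi_i,r_k\rangle|$ (any maximizer); set $s_k=\operatorname{sign}(\langle\varphi_{i_k},r_k\rangle)\,\beta\, e_{i_k}$ ($e_i$ the canonical basis vectors, $\operatorname{sign}(0)\in\{\pm1\}$ arbitrary); choose $\gamma_k\in\arg\min_{\gamma\in[0,1]}\|y-\Phi(x_k+\gamma(s_k-x_k))\|_2^2$; set $x_{k+1}=x_k+\gamma_k(s_k-x_k)$. *)

theory Defs
  imports "HOL-Analysis.Analysis"
begin

definition atom :: "real^'n^'d \<Rightarrow> 'n \<Rightarrow> real^'d" where
  "atom Phi i = column i Phi"

definition is_dictionary :: "real^'n^'d \<Rightarrow> bool" where
  "is_dictionary Phi \<longleftrightarrow> (\<forall>i. norm (atom Phi i) = 1)"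

text \<open>Coherence: max over j \<noteq> k of |<phi_j, phi_k>| (0 if there is only one atom).\<close>
definition coherence :: "real^'n^'d \<Rightarrow> real" where
  "coherence Phi = Max ({0} \<union> {\<bar>atom Phi j \<bullet> atom Phi k\<bar> | j k. j \<noteq> k})"

text \<open>Babel function; mu_1(0) = 0, and 0 when no admissible (Lambda, i) exists.\<close>
definition babel :: "real^'n^'d \<Rightarrow> nat \<Rightarrow> real" where
  "babel Phi p = (if p = 0 then 0 else
     Max ({0} \<union> {\<Sum>j\<in>L. \<bar>atom Phi i \<bullet> atom Phi j\<bar> | L i. card L = p \<and> i \<notin> L}))"

definition l1norm :: "real^'n \<Rightarrow> real" where
  "l1norm x = (\<Sum>i\<in>UNIV. \<bar>x $ i\<bar>)"

definition l0norm :: "real^'n \<Rightarrow> nat" where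
  "l0norm x = card {i. x $ i \<noteq> 0}"

definition residual :: "real^'n^'d \<Rightarrow> real^'d \<Rightarrow> real^'n \<Rightarrow> real^'d" where
  "residual Phi y x = y - Phi *v x"

text \<open>xs is a (any) run of the Frank-Wolfe algorithm for problem (P_beta):
  every admissible choice of maximizing index, sign and step size is allowed.\<close>
definition fw_run :: "real^'n^'d \<Rightarrow> real^'d \<Rightarrow> real \<Rightarrow> (nat \<Rightarrow> real^'n) \<Rightarrow> bool" where
  "fw_run Phi y beta xs \<longleftrightarrow> xs 0 = 0 \<and>
     (\<forall>k. \<exists>i sg gam.
        (\<forall>j. \<bar>atom Phi j \<bullet> residual Phi y (xs k)\<bar> \<le> \<bar>atom Phi i \<bullet> residual Phi y (xs k)\<bar>) \<and>
        sg \<in> {-1, 1} \<and>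
        (atom Phi i \<bullet> residual Phi y (xs k) \<noteq> 0 \<longrightarrow> sg = sgn (atom Phi i \<bullet> residual Phi y (xs k))) \<and>
        (let s = (sg * beta) *\<^sub>R axis i 1 in
          gam \<in> {0..1} \<and>
          (\<forall>g\<in>{0..1}. (norm (y - Phi *v (xs k + gam *\<^sub>R (s - xs k))))\<^sup>2
                        \<le> (norm (y - Phi *v (xs k + g *\<^sub>R (s - xs k))))\<^sup>2) \<and>
          xs (Suc k) = xs k + gam *\<^sub>R (s - xs k)))"

end

theory Submission
  imports Defs
begin

lemma mv_sum: "Phi *v v = (\<Sum>j\<in>UNIV. v$j *\<^sub>R atom Phi j)"
  by (simp add: matrix_mult_sum atom_def scalar_mult_eq_scaleR)

lemma r_inner_mv: "r \<bullet> (Phi *v v) = (\<Sum>j\<in>UNIV. v$j * (atom Phi j \<bullet> r))"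
  by (simp add: mv_sum inner_sum_right inner_commute)

lemma norm_mv: assumes "is_dictionary Phi" shows "norm (Phi *v v) \<le> l1norm v"
proof -
  have "norm (Phi *v v) \<le> (\<Sum>j\<in>UNIV. norm (v$j *\<^sub>R atom Phi j))"
    unfolding mv_sum by (rule norm_sum)
  also have "\<dots> = l1norm v" using assms by (simp add: is_dictionary_def l1norm_def)
  finally show ?thesis .
qed

lemma atom_bound: assumes "is_dictionary Phi" shows "\<bar>atom Phi i \<bullet> r\<bar> \<le> norm r"
  using Cauchy_Schwarz_ineq2[of "atom Phi i" r] assms by (simp add: is_dictionary_def)

lemma atom_self: assumes "is_dictionary Phi" shows "atom Phi i \<bullet> atom Phi i = 1"
  using assms by (simp add: is_dictionary_def dot_square_norm)

lemma coh_fin: "finite ({0} \<union> {\<bar>atom Phi j \<bullet> atom Phi k\<bar> | j k. j \<noteq> k})"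
proof -
  have "{\<bar>atom Phi j \<bullet> atom Phi k\<bar> | j k. j \<noteq> k} \<subseteq> (\<lambda>(j,k). \<bar>atom Phi j \<bullet> atom Phi k\<bar>) ` UNIV"
    by auto
  note sub = this
  show ?thesis using finite_subset[OF sub finite_imageI[OF finite]] by simp
qed

lemma coh_ge: "j \<noteq> k \<Longrightarrow> \<bar>atom Phi j \<bullet> atom Phi k\<bar> \<le> coherence Phi"
  unfolding coherence_def by (rule Max_ge[OF coh_fin]) blast

lemma coh_nonneg: "0 \<le> coherence Phi"
  unfolding coherence_def by (rule Max_ge[OF coh_fin]) blast

lemma babel_fin: "finite ({0} \<union> {\<Sum>j\<in>L. \<bar>atom Phi i \<bullet> atom Phi j\<bar> | L i. card L = p \<and> i \<notin> L})"
proof -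
  have "{\<Sum>j\<in>L. \<bar>atom Phi i \<bullet> atom Phi j\<bar> | L i. card L = p \<and> i \<notin> L}
     \<subseteq> (\<lambda>(L,i). \<Sum>j\<in>L. \<bar>atom Phi i \<bullet> atom Phi j\<bar>) ` UNIV"
    by auto
  note sub = this
  show ?thesis using finite_subset[OF sub finite_imageI[OF finite]] by simp
qed

lemma babel_nonneg: "0 \<le> babel Phi p"
proof -
  have "0 \<le> Max ({0} \<union> {\<Sum>j\<in>L. \<bar>atom Phi i \<bullet> atom Phi j\<bar> | L i. card L = p \<and> i \<notin> L})"
    by (rule Max_ge[OF babel_fin]) simp
  then show ?thesis by (simp add: babel_def)
qed

lemma babel_le: "babel Phi p \<le> real p * coherence Phi"
proof (cases "p = 0")
  case True then show ?thesis by (simp add: babel_def)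
next
  case False
  have "Max ({0} \<union> {\<Sum>j\<in>L. \<bar>atom Phi i \<bullet> atom Phi j\<bar> | L i. card L = p \<and> i \<notin> L}) \<le> real p * coherence Phi"
  proof (rule Max.boundedI[OF babel_fin])
    fix a assume "a \<in> {0} \<union> {\<Sum>j\<in>L. \<bar>atom Phi i \<bullet> atom Phi j\<bar> | L i. card L = p \<and> i \<notin> L}"
    then show "a \<le> real p * coherence Phi"
    proof
      assume "a \<in> {0}" then show ?thesis using coh_nonneg[of Phi] by (simp add: zero_le_mult_iff)
    next
      assume "a \<in> {\<Sum>j\<in>L. \<bar>atom Phi i \<bullet> atom Phi j\<bar> | L i. card L = p \<and> i \<notin> L}"
      then obtain L i where a: "a = (\<Sum>j\<in>L. \<bar>atom Phi i \<bullet> atom Phi j\<bar>)" "card L = p" "i \<notin> L" by blast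
      have "a \<le> (\<Sum>j\<in>L. coherence Phi)" unfolding a(1)
      proof (rule sum_mono)
        fix j assume "j \<in> L"
        then have "i \<noteq> j" using a(3) by auto
        then show "\<bar>atom Phi i \<bullet> atom Phi j\<bar> \<le> coherence Phi" by (rule coh_ge)
      qed
      also have "\<dots> = real p * coherence Phi" using a(2) by simp
      finally show ?thesis .
    qed
  qed auto
  then show ?thesis using False by (simp add: babel_def)
qed


lemma erc:
  fixes Phi :: "real^'n^'d" and w xstar :: "real^'n"
  assumes dict: "is_dictionary Phi"
    and mu: "(2 * real m - 1) * coherence Phi < 1"
    and supp: "\<forall>j. xstar$j = 0 \<longrightarrow> w$j = 0"
    and l0: "l0norm xstar \<le> m"
    and rne: "Phi *v w \<noteq> 0"
    and imax: "\<forall>j. \<bar>atom Phi j \<bullet> (Phi *v w)\<bar> \<le> \<bar>atom Phi i \<bullet> (Phi *v w)\<bar>"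
  shows "xstar$i \<noteq> 0 \<and> (norm (Phi *v w))\<^sup>2 \<le> 2 * real m * (atom Phi i \<bullet> (Phi *v w))\<^sup>2"
proof -
  define S where "S = {j. xstar$j \<noteq> 0}"
  define r where "r = Phi *v w"
  define \<mu> where "\<mu> = coherence Phi"
  define G where "G = (\<lambda>a b. atom Phi a \<bullet> atom Phi b)"
  define M where "M = \<bar>atom Phi i \<bullet> r\<bar>"
  have finS: "finite S" by simp
  have cardS: "card S \<le> m" using l0 by (simp add: l0norm_def S_def)
  have wS: "j \<notin> S \<Longrightarrow> w$j = 0" for j using supp by (simp add: S_def)
  have rS: "atom Phi l \<bullet> r = (\<Sum>j\<in>S. w$j * G l j)" for l
  proof -
    have "atom Phi l \<bullet> r = (\<Sum>j\<in>UNIV. w$j * G l j)"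
      by (simp add: r_def mv_sum inner_sum_right G_def)
    also have "\<dots> = (\<Sum>j\<in>S. w$j * G l j)" by (rule sum.mono_neutral_right) (auto simp: wS)
    finally show ?thesis .
  qed
  have "w \<noteq> 0" using rne by auto
  then obtain j0 where j0: "w$j0 \<noteq> 0" by (auto simp: vec_eq_iff)
  hence "j0 \<in> S" using wS by blast
  hence Sne: "S \<noteq> {}" by auto
  define W where "W = Max ((\<lambda>j. \<bar>w$j\<bar>) ` S)"
  have "W \<in> (\<lambda>j. \<bar>w$j\<bar>) ` S" unfolding W_def using finS Sne by (intro Max_in) auto
  then obtain i0 where i0: "i0 \<in> S" "\<bar>w$i0\<bar> = W" by auto
  have Wge: "\<bar>w$j\<bar> \<le> W" for j
  proof (cases "j \<in> S")
    case True then show ?thesis unfolding W_def using finS by (intro Max_ge) auto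
  next
    case False then show ?thesis using wS[of j] i0 by auto
  qed
  have Wpos: "W > 0" using Wge[of j0] j0 by linarith
  have s1: "card S \<ge> 1" using Sne finS by (simp add: Suc_le_eq card_gt_0_iff)
  have \<mu>0: "\<mu> \<ge> 0" unfolding \<mu>_def by (rule coh_nonneg)
  have "(2 * real (card S) - 1) * \<mu> \<le> (2 * real m - 1) * \<mu>"
    using cardS \<mu>0 by (intro mult_right_mono) auto
  hence \<mu>s: "(2 * real (card S) - 1) * \<mu> < 1" using mu unfolding \<mu>_def by linarith
  have Gb: "a \<noteq> b \<Longrightarrow> \<bar>G a b\<bar> \<le> \<mu>" for a b unfolding G_def \<mu>_def by (rule coh_ge)
  have i0eq: "atom Phi i0 \<bullet> r = w$i0 + (\<Sum>j\<in>S-{i0}. w$j * G i0 j)"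
    using rS[of i0] sum.remove[OF finS i0(1), of "\<lambda>j. w$j * G i0 j"] atom_self[OF dict, of i0] by (simp add: G_def)
  have "\<bar>\<Sum>j\<in>S-{i0}. w$j * G i0 j\<bar> \<le> (\<Sum>j\<in>S-{i0}. \<bar>w$j * G i0 j\<bar>)" by (rule sum_abs)
  also have "\<dots> \<le> (\<Sum>j\<in>S-{i0}. W * \<mu>)"
  proof (rule sum_mono)
    fix j assume "j \<in> S - {i0}"
    then have "\<bar>G i0 j\<bar> \<le> \<mu>" using Gb by auto
    then show "\<bar>w$j * G i0 j\<bar> \<le> W * \<mu>" unfolding abs_mult
      using Wge[of j] by (intro mult_mono) auto
  qed
  also have "\<dots> = (real (card S) - 1) * W * \<mu>"
    using i0(1) finS s1 by (simp add: card_Diff_singleton of_nat_diff)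
  finally have offb: "\<bar>\<Sum>j\<in>S-{i0}. w$j * G i0 j\<bar> \<le> (real (card S) - 1) * W * \<mu>" .
  have low: "\<bar>atom Phi i0 \<bullet> r\<bar> \<ge> W - (real (card S) - 1) * W * \<mu>"
    using i0eq offb i0(2) by linarith
  have offS: "\<bar>atom Phi j \<bullet> r\<bar> \<le> real (card S) * W * \<mu>" if "j \<notin> S" for j
  proof -
    have "\<bar>atom Phi j \<bullet> r\<bar> \<le> (\<Sum>l\<in>S. \<bar>w$l * G j l\<bar>)" unfolding rS by (rule sum_abs)
    also have "\<dots> \<le> (\<Sum>l\<in>S. W * \<mu>)"
    proof (rule sum_mono)
      fix l assume "l \<in> S"
      then have "j \<noteq> l" using that by auto
      then have "\<bar>G j l\<bar> \<le> \<mu>" using Gb by blast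
      then show "\<bar>w$l * G j l\<bar> \<le> W * \<mu>" unfolding abs_mult
        using Wge[of l] by (intro mult_mono) auto
    qed
    finally show ?thesis by simp
  qed
  have "W * ((2 * real (card S) - 1) * \<mu>) < W * 1"
    using \<mu>s Wpos by (intro mult_strict_left_mono) auto
  hence key: "real (card S) * W * \<mu> < W - (real (card S) - 1) * W * \<mu>"
    by (simp add: algebra_simps)
  have iS: "i \<in> S"
  proof (rule ccontr)
    assume "i \<notin> S"
    then have "\<bar>atom Phi i \<bullet> r\<bar> \<le> real (card S) * W * \<mu>" by (rule offS)
    moreover have "\<bar>atom Phi i0 \<bullet> r\<bar> \<le> \<bar>atom Phi i \<bullet> r\<bar>" using imax r_def by blast
    ultimately show False using key low by linarith
  qed
  have half: "(real (card S) - 1) * \<mu> \<le> 1/2" using \<mu>s \<mu>0 by (simp add: algebra_simps)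
  have "W * ((real (card S) - 1) * \<mu>) \<le> W * (1/2)"
    using half Wpos by (intro mult_left_mono) auto
  moreover have "\<bar>atom Phi i0 \<bullet> r\<bar> \<le> M" using imax r_def M_def by auto
  moreover have "(real (card S) - 1) * W * \<mu> = W * ((real (card S) - 1) * \<mu>)" by (simp add: algebra_simps)
  ultimately have WM: "W \<le> 2 * M" using low by linarith
  have "(norm r)\<^sup>2 = r \<bullet> (Phi *v w)" by (simp add: r_def power2_norm_eq_inner)
  also have "\<dots> = (\<Sum>j\<in>UNIV. w$j * (atom Phi j \<bullet> r))" by (rule r_inner_mv)
  also have "\<dots> = (\<Sum>j\<in>S. w$j * (atom Phi j \<bullet> r))"
    by (rule sum.mono_neutral_right) (auto simp: wS)
  also have "\<dots> \<le> (\<Sum>j\<in>S. W * M)"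
  proof (rule sum_mono)
    fix j assume "j \<in> S"
    have "w$j * (atom Phi j \<bullet> r) \<le> \<bar>w$j\<bar> * \<bar>atom Phi j \<bullet> r\<bar>"
      by (metis abs_ge_self abs_mult)
    also have "\<dots> \<le> W * M" using Wge[of j] imax r_def M_def by (intro mult_mono) auto
    finally show "w$j * (atom Phi j \<bullet> r) \<le> W * M" .
  qed
  also have "\<dots> = real (card S) * W * M" by simp
  also have "\<dots> \<le> real m * (2 * M) * M"
    using cardS WM Wpos by (intro mult_mono) auto
  also have "\<dots> = 2 * real m * (atom Phi i \<bullet> r)\<^sup>2" by (simp add: M_def power2_eq_square)
  finally show ?thesis using iS by (simp add: S_def r_def)
qed


lemma l1_axis: "l1norm ((c::real) *\<^sub>R axis i 1 :: real^'n) = \<bar>c\<bar>"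
proof -
  have "l1norm (c *\<^sub>R axis i 1 :: real^'n) = (\<Sum>j\<in>UNIV. if j = i then \<bar>c\<bar> else 0)"
    unfolding l1norm_def by (intro sum.cong) (auto simp: axis_def)
  also have "\<dots> = \<bar>c\<bar>" by simp
  finally show ?thesis .
qed

lemma l1_conv: assumes "0 \<le> g" "g \<le> 1"
  shows "l1norm (x + g *\<^sub>R (s - x)) \<le> (1 - g) * l1norm x + g * l1norm (s::real^'n)"
proof -
  have "l1norm (x + g *\<^sub>R (s - x)) = (\<Sum>j\<in>UNIV. \<bar>(1 - g) * x$j + g * s$j\<bar>)"
    unfolding l1norm_def by (intro sum.cong) (auto simp: algebra_simps)
  also have "\<dots> \<le> (\<Sum>j\<in>UNIV. (1 - g) * \<bar>x$j\<bar> + g * \<bar>s$j\<bar>)"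
  proof (rule sum_mono)
    fix j
    have "\<bar>(1 - g) * x$j + g * s$j\<bar> \<le> \<bar>(1 - g) * x$j\<bar> + \<bar>g * s$j\<bar>" by (rule abs_triangle_ineq)
    also have "\<dots> = (1 - g) * \<bar>x$j\<bar> + g * \<bar>s$j\<bar>" using assms by (simp add: abs_mult)
    finally show "\<bar>(1 - g) * x$j + g * s$j\<bar> \<le> (1 - g) * \<bar>x$j\<bar> + g * \<bar>s$j\<bar>" .
  qed
  also have "\<dots> = (1 - g) * l1norm x + g * l1norm s"
    by (simp add: l1norm_def sum.distrib sum_distrib_left)
  finally show ?thesis .
qed

lemma step:
  fixes Phi :: "real^'n^'d" and y :: "real^'d" and xstar x x' s :: "real^'n"
  assumes dict: "is_dictionary Phi"
    and mu: "(2 * real m - 1) * coherence Phi < 1"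
    and m1: "m \<ge> 1"
    and yd: "y = Phi *v xstar"
    and l0: "l0norm xstar \<le> m"
    and bpos: "beta > 0"
    and l1s: "l1norm xstar < beta"
    and B0: "0 \<le> B"
    and xl1: "l1norm x \<le> beta"
    and xsup: "residual Phi y x = 0 \<or> (\<forall>j. xstar$j = 0 \<longrightarrow> x$j = 0)"
    and imax: "\<forall>j. \<bar>atom Phi j \<bullet> residual Phi y x\<bar> \<le> \<bar>atom Phi i \<bullet> residual Phi y x\<bar>"
    and sg: "sg \<in> {-1, 1}"
    and sgn: "atom Phi i \<bullet> residual Phi y x \<noteq> 0 \<longrightarrow> sg = sgn (atom Phi i \<bullet> residual Phi y x)"
    and gam: "gam \<in> {0..1}"
    and gmin: "\<forall>g\<in>{0..1}. (norm (y - Phi *v (x + gam *\<^sub>R (s - x))))\<^sup>2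
                        \<le> (norm (y - Phi *v (x + g *\<^sub>R (s - x))))\<^sup>2"
    and sdef: "s = (sg * beta) *\<^sub>R axis i 1"
    and x': "x' = x + gam *\<^sub>R (s - x)"
  shows "(norm (residual Phi y x'))\<^sup>2 \<le> (1 - (1/16) * ((1 - B) / m) * (1 - l1norm xstar / beta)\<^sup>2)
               * (norm (residual Phi y x))\<^sup>2"
    and "l1norm x' \<le> beta"
    and "residual Phi y x' = 0 \<or> (\<forall>j. xstar$j = 0 \<longrightarrow> x'$j = 0)"
proof -
  define r where "r = residual Phi y x"
  define D where "D = Phi *v (s - x)"
  define M where "M = \<bar>atom Phi i \<bullet> r\<bar>"
  define \<rho> where "\<rho> = beta - l1norm xstar"
  define \<theta> where "\<theta> = (1/16) * ((1 - B) / m) * (1 - l1norm xstar / beta)\<^sup>2"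
  have res_g: "y - Phi *v (x + g *\<^sub>R (s - x)) = r - g *\<^sub>R D" for g
    by (simp add: r_def D_def residual_def algebra_simps)
  have new: "(norm (residual Phi y x'))\<^sup>2 \<le> (norm (r - g *\<^sub>R D))\<^sup>2" if "g \<in> {0..1}" for g
    using gmin that unfolding x' residual_def res_g by blast
  have ls: "l1norm s = beta" using sdef sg bpos l1_axis[of "sg * beta" i] by (auto simp: abs_mult)
  show "l1norm x' \<le> beta"
  proof -
    have "l1norm x' \<le> (1 - gam) * l1norm x + gam * beta"
      using l1_conv[of gam x s] gam x' ls by auto
    also have "\<dots> \<le> (1 - gam) * beta + gam * beta"
      using gam xl1 by (intro add_mono mult_left_mono) auto
    finally show ?thesis by (simp add: algebra_simps)
  qed
  have P13: "(norm (residual Phi y x'))\<^sup>2 \<le> (1 - (1/16) * ((1 - B) / m) * (1 - l1norm xstar / beta)\<^sup>2)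
               * (norm (residual Phi y x))\<^sup>2
     \<and> (residual Phi y x' = 0 \<or> (\<forall>j. xstar$j = 0 \<longrightarrow> x'$j = 0))"
  proof (cases "r = 0")
    case True
    have "(norm (residual Phi y x'))\<^sup>2 \<le> 0" using new[of 0] True by simp
    hence "residual Phi y x' = 0" by simp
    then show ?thesis using True r_def by simp
  next
    case False
    define w where "w = xstar - x"
    have rw: "r = Phi *v w" by (simp add: r_def residual_def yd w_def matrix_vector_mult_diff_distrib)
    have supp: "\<forall>j. xstar$j = 0 \<longrightarrow> w$j = 0" using xsup False r_def by (auto simp: w_def)
    have E: "xstar$i \<noteq> 0 \<and> (norm r)\<^sup>2 \<le> 2 * real m * M\<^sup>2"
      using erc[OF dict mu supp l0, of i] False imax unfolding rw[symmetric] r_def M_def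
      by (simp add: power2_abs)
    have part3: "\<forall>j. xstar$j = 0 \<longrightarrow> x'$j = 0"
    proof (intro allI impI)
      fix j assume "xstar$j = 0"
      then have "j \<noteq> i" "x$j = 0" using E supp by (auto simp: w_def)
      then show "x'$j = 0" by (simp add: x' sdef axis_def)
    qed
    have Ds: "Phi *v s = (sg * beta) *\<^sub>R atom Phi i"
      by (simp add: sdef matrix_vector_mult_scaleR matrix_vector_mult_basis atom_def)
    have rs: "r \<bullet> (Phi *v s) = beta * M"
    proof (cases "atom Phi i \<bullet> r = 0")
      case True then show ?thesis by (simp add: Ds M_def inner_commute)
    next
      case False
      then have "sg = sgn (atom Phi i \<bullet> r)" using sgn r_def by simp
      then show ?thesis using bpos
        by (simp add: Ds M_def inner_commute abs_sgn algebra_simps)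
    qed
    have rx: "r \<bullet> (Phi *v x) = r \<bullet> y - (norm r)\<^sup>2"
    proof -
      have "Phi *v x = y - r" by (simp add: r_def residual_def)
      then show ?thesis by (simp add: inner_diff_right power2_norm_eq_inner)
    qed
    have ry: "r \<bullet> y \<le> l1norm xstar * M"
    proof -
      have "r \<bullet> y = (\<Sum>j\<in>UNIV. xstar$j * (atom Phi j \<bullet> r))" unfolding yd by (rule r_inner_mv)
      also have "\<dots> \<le> (\<Sum>j\<in>UNIV. \<bar>xstar$j\<bar> * M)"
      proof (rule sum_mono)
        fix j
        have "xstar$j * (atom Phi j \<bullet> r) \<le> \<bar>xstar$j\<bar> * \<bar>atom Phi j \<bullet> r\<bar>"
          by (metis abs_ge_self abs_mult)
        also have "\<dots> \<le> \<bar>xstar$j\<bar> * M" using imax r_def M_def by (intro mult_left_mono) auto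
        finally show "xstar$j * (atom Phi j \<bullet> r) \<le> \<bar>xstar$j\<bar> * M" .
      qed
      also have "\<dots> = l1norm xstar * M" by (simp add: l1norm_def sum_distrib_right)
      finally show ?thesis .
    qed
    have M0: "0 \<le> M" by (simp add: M_def)
    have a: "r \<bullet> D \<ge> \<rho> * M"
    proof -
      have "r \<bullet> D = beta * M - r \<bullet> y + (norm r)\<^sup>2"
        by (simp add: D_def matrix_vector_mult_diff_distrib inner_diff_right rs rx)
      moreover have "\<rho> * M = beta * M - l1norm xstar * M" by (simp add: \<rho>_def algebra_simps)
      ultimately show ?thesis using ry zero_le_power2[of "norm r"] by linarith
    qed
    have Dn: "norm D \<le> 2 * beta"
    proof -
      have "norm D \<le> norm (Phi *v s) + norm (Phi *v x)"
        by (simp add: D_def matrix_vector_mult_diff_distrib norm_triangle_ineq4)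
      also have "\<dots> \<le> beta + beta" using norm_mv[OF dict, of s] norm_mv[OF dict, of x] ls xl1 by linarith
      finally show ?thesis by simp
    qed
    have rn: "norm r \<le> 2 * beta"
    proof -
      have "norm r \<le> norm y + norm (Phi *v x)"
        by (simp add: r_def residual_def norm_triangle_ineq4)
      also have "\<dots> \<le> beta + beta" using norm_mv[OF dict, of xstar] norm_mv[OF dict, of x] l1s xl1 unfolding yd by linarith
      finally show ?thesis by simp
    qed
    have Mr: "M \<le> norm r" unfolding M_def by (rule atom_bound[OF dict])
    have \<rho>pos: "0 < \<rho>" "\<rho> \<le> beta" using l1s by (auto simp: \<rho>_def l1norm_def)
    define g0 where "g0 = \<rho> * M / (4 * beta\<^sup>2)"
    have "\<rho> * M \<le> beta * (2 * beta)" using \<rho>pos M0 Mr rn by (intro mult_mono) auto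
    moreover have "beta * (2 * beta) \<le> 4 * beta\<^sup>2" using bpos by (simp add: power2_eq_square)
    ultimately have "\<rho> * M \<le> 4 * beta\<^sup>2" by linarith
    hence g0: "g0 \<in> {0..1}" using \<rho>pos M0 bpos by (auto simp: g0_def)
    have "(norm (r - g0 *\<^sub>R D))\<^sup>2 = (r - g0 *\<^sub>R D) \<bullet> (r - g0 *\<^sub>R D)"
      by (simp only: power2_norm_eq_inner)
    also have "\<dots> = r \<bullet> r - 2 * g0 * (r \<bullet> D) + g0\<^sup>2 * (D \<bullet> D)"
      by (simp add: inner_diff_left inner_diff_right inner_commute power2_eq_square algebra_simps)
    also have "\<dots> = (norm r)\<^sup>2 - 2 * g0 * (r \<bullet> D) + g0\<^sup>2 * (norm D)\<^sup>2"
      by (simp only: power2_norm_eq_inner)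
    also have "\<dots> \<le> (norm r)\<^sup>2 - 2 * g0 * (\<rho> * M) + g0\<^sup>2 * (2 * beta)\<^sup>2"
    proof -
      have "g0 * (\<rho> * M) \<le> g0 * (r \<bullet> D)" using a g0 by (intro mult_left_mono) auto
      moreover have "(norm D)\<^sup>2 \<le> (2 * beta)\<^sup>2" using Dn by (intro power_mono) auto
      hence "g0\<^sup>2 * (norm D)\<^sup>2 \<le> g0\<^sup>2 * (2 * beta)\<^sup>2" by (intro mult_left_mono) auto
      ultimately show ?thesis by linarith
    qed
    also have "\<dots> = (norm r)\<^sup>2 - \<rho>\<^sup>2 * M\<^sup>2 / (4 * beta\<^sup>2)"
      using bpos by (simp add: g0_def field_simps power2_eq_square)
    also have "\<dots> \<le> (1 - \<theta>) * (norm r)\<^sup>2"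
    proof -
      have t: "\<theta> = (1/16) * ((1 - B) / m) * (\<rho> / beta)\<^sup>2"
        using bpos by (simp add: \<theta>_def \<rho>_def field_simps)
      have "(1 - B) / m * (norm r)\<^sup>2 \<le> 1 / m * (norm r)\<^sup>2"
        using B0 m1 by (intro mult_right_mono divide_right_mono) auto
      also have "\<dots> \<le> 2 * M\<^sup>2" using E m1 by (simp add: field_simps)
      finally have "(1 - B) / m * (norm r)\<^sup>2 \<le> 2 * M\<^sup>2" .
      hence c1: "(\<rho> / beta)\<^sup>2 * ((1 - B) / m * (norm r)\<^sup>2) \<le> (\<rho> / beta)\<^sup>2 * (2 * M\<^sup>2)"
        by (intro mult_left_mono) auto
      have c2: "\<theta> * (norm r)\<^sup>2 = (1/16) * ((\<rho> / beta)\<^sup>2 * ((1 - B) / m * (norm r)\<^sup>2))"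
        unfolding t by (simp add: mult_ac)
      have "\<theta> * (norm r)\<^sup>2 \<le> (1/16) * ((\<rho> / beta)\<^sup>2 * (2 * M\<^sup>2))"
        unfolding c2 by (rule mult_left_mono[OF c1]) simp
      also have "\<dots> \<le> \<rho>\<^sup>2 * M\<^sup>2 / (4 * beta\<^sup>2)"
        using bpos M0 \<rho>pos by (simp add: field_simps power2_eq_square)
      finally show ?thesis by (simp add: algebra_simps)
    qed
    finally have "(norm (residual Phi y x'))\<^sup>2 \<le> (1 - \<theta>) * (norm r)\<^sup>2"
      using new[OF g0] by linarith
    then show ?thesis using part3 by (simp add: \<theta>_def r_def)
  qed
  then show "(norm (residual Phi y x'))\<^sup>2 \<le> (1 - (1/16) * ((1 - B) / m) * (1 - l1norm xstar / beta)\<^sup>2)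
               * (norm (residual Phi y x))\<^sup>2" by blast
  show "residual Phi y x' = 0 \<or> (\<forall>j. xstar$j = 0 \<longrightarrow> x'$j = 0)" using P13 by blast
qed


theorem theorem2:
  fixes Phi :: "real^'n^'d" and y :: "real^'d" and xstar :: "real^'n"
    and m :: nat and beta :: real and xs :: "nat \<Rightarrow> real^'n"
  assumes "is_dictionary Phi"
    and "m \<ge> 1"
    and "coherence Phi = 0 \<or> real m < (inverse (coherence Phi) + 1) / 2"
    and "y = Phi *v xstar"
    and "l0norm xstar \<le> m"
    and "beta > 0"
    and "l1norm xstar < beta"
    and "fw_run Phi y beta xs"
  shows "\<exists>K. \<forall>k\<ge>K.
           (norm (residual Phi y (xs (Suc k))))\<^sup>2
             \<le> (1 - (1/16) * ((1 - babel Phi (m - 1)) / m) * (1 - l1norm xstar / beta)\<^sup>2)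
               * (norm (residual Phi y (xs k)))\<^sup>2
         \<and> 0 < (1/16) * ((1 - babel Phi (m - 1)) / m) * (1 - l1norm xstar / beta)\<^sup>2
         \<and> (1/16) * ((1 - babel Phi (m - 1)) / m) * (1 - l1norm xstar / beta)\<^sup>2 \<le> 1"
proof -
  note dict = assms(1) and m1 = assms(2) and yd = assms(4) and l0 = assms(5)
    and bpos = assms(6) and l1s = assms(7)
  define \<mu> where "\<mu> = coherence Phi"
  define B where "B = babel Phi (m - 1)"
  have \<mu>0: "0 \<le> \<mu>" unfolding \<mu>_def by (rule coh_nonneg)
  have mu: "(2 * real m - 1) * coherence Phi < 1"
  proof (cases "\<mu> = 0")
    case True then show ?thesis by (simp add: \<mu>_def)
  next
    case False
    then have mpos: "\<mu> > 0" using \<mu>0 by auto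
    have "real m < (inverse \<mu> + 1) / 2" using assms(3) False by (simp add: \<mu>_def)
    hence "2 * real m - 1 < inverse \<mu>" by simp
    hence "(2 * real m - 1) * \<mu> < inverse \<mu> * \<mu>" using mpos by (intro mult_strict_right_mono) auto
    then show ?thesis using mpos by (simp add: \<mu>_def)
  qed
  have B0: "0 \<le> B" unfolding B_def by (rule babel_nonneg)
  have "B \<le> real (m - 1) * \<mu>" unfolding B_def \<mu>_def by (rule babel_le)
  also have "\<dots> = (real m - 1) * \<mu>" using m1 by (simp add: of_nat_diff)
  also have "\<dots> \<le> (2 * real m - 1) * \<mu>" using m1 \<mu>0 by (intro mult_right_mono) auto
  finally have B1: "B < 1" using mu unfolding \<mu>_def by linarith
  have x0: "xs 0 = 0" and run: "\<forall>k. \<exists>i sg gam.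
        (\<forall>j. \<bar>atom Phi j \<bullet> residual Phi y (xs k)\<bar> \<le> \<bar>atom Phi i \<bullet> residual Phi y (xs k)\<bar>) \<and>
        sg \<in> {-1, 1} \<and>
        (atom Phi i \<bullet> residual Phi y (xs k) \<noteq> 0 \<longrightarrow> sg = sgn (atom Phi i \<bullet> residual Phi y (xs k))) \<and>
        (let s = (sg * beta) *\<^sub>R axis i 1 in
          gam \<in> {0..1} \<and>
          (\<forall>g\<in>{0..1}. (norm (y - Phi *v (xs k + gam *\<^sub>R (s - xs k))))\<^sup>2
                        \<le> (norm (y - Phi *v (xs k + g *\<^sub>R (s - xs k))))\<^sup>2) \<and>
          xs (Suc k) = xs k + gam *\<^sub>R (s - xs k))"
    using assms(8) unfolding fw_run_def by blast+
  have stepk: "(norm (residual Phi y (xs (Suc k))))\<^sup>2 \<le> (1 - (1/16) * ((1 - B) / m) * (1 - l1norm xstar / beta)\<^sup>2)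
               * (norm (residual Phi y (xs k)))\<^sup>2
    \<and> l1norm (xs (Suc k)) \<le> beta
    \<and> (residual Phi y (xs (Suc k)) = 0 \<or> (\<forall>j. xstar$j = 0 \<longrightarrow> xs (Suc k) $j = 0))"
    if inv: "l1norm (xs k) \<le> beta" "residual Phi y (xs k) = 0 \<or> (\<forall>j. xstar$j = 0 \<longrightarrow> xs k $j = 0)"
    for k
  proof -
    obtain i sg gam where c:
      "\<forall>j. \<bar>atom Phi j \<bullet> residual Phi y (xs k)\<bar> \<le> \<bar>atom Phi i \<bullet> residual Phi y (xs k)\<bar>"
      "sg \<in> {-1, 1}"
      "atom Phi i \<bullet> residual Phi y (xs k) \<noteq> 0 \<longrightarrow> sg = sgn (atom Phi i \<bullet> residual Phi y (xs k))"
      "gam \<in> {0..1}"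
      "\<forall>g\<in>{0..1}. (norm (y - Phi *v (xs k + gam *\<^sub>R ((sg * beta) *\<^sub>R axis i 1 - xs k))))\<^sup>2
                        \<le> (norm (y - Phi *v (xs k + g *\<^sub>R ((sg * beta) *\<^sub>R axis i 1 - xs k))))\<^sup>2"
      "xs (Suc k) = xs k + gam *\<^sub>R ((sg * beta) *\<^sub>R axis i 1 - xs k)"
      using run[rule_format, of k] unfolding Let_def by blast
    show ?thesis
      using step[OF dict mu m1 yd l0 bpos l1s B0 inv c(1) c(2) c(3) c(4) c(5) refl c(6)] by blast
  qed
  have inv: "l1norm (xs k) \<le> beta \<and> (residual Phi y (xs k) = 0 \<or> (\<forall>j. xstar$j = 0 \<longrightarrow> xs k $j = 0))" for k
  proof (induction k)
    case 0 then show ?case using x0 bpos by (simp add: l1norm_def)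
  next
    case (Suc k) then show ?case using stepk by blast
  qed
  have l1nn: "0 \<le> l1norm xstar" by (simp add: l1norm_def sum_nonneg)
  have q: "0 < 1 - l1norm xstar / beta" "1 - l1norm xstar / beta \<le> 1"
    using l1s bpos l1nn by (auto simp: field_simps)
  have mpos: "0 < real m" using m1 by simp
  have pos: "0 < (1/16) * ((1 - B) / m) * (1 - l1norm xstar / beta)\<^sup>2"
  proof -
    have "0 < 1 - B" using B1 by simp
    moreover have "0 < (1 - l1norm xstar / beta)\<^sup>2" by (rule zero_less_power[OF q(1)])
    ultimately have "0 < (1 - B) / m * (1 - l1norm xstar / beta)\<^sup>2" using mpos by simp
    then show ?thesis by simp
  qed
  have "(1 - B) / m \<le> 1" using B0 m1 by (simp add: field_simps)
  moreover have "(1 - l1norm xstar / beta)\<^sup>2 \<le> 1" using q by (simp add: power_le_one)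
  moreover have "0 \<le> (1 - B) / m" using B1 mpos by simp
  ultimately have "(1 - B) / m * (1 - l1norm xstar / beta)\<^sup>2 \<le> 1 * 1"
    by (intro mult_mono) auto
  hence le1: "(1/16) * ((1 - B) / m) * (1 - l1norm xstar / beta)\<^sup>2 \<le> 1" by simp
  show ?thesis
    using stepk inv pos le1 unfolding B_def by blast
qed

end
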